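(* Let $\mathcal{F}=\mathcal{F}(X)$ be the free group on an alphabet $X$, equipped with a bi-order $\prec$, and let $W$ be a cyclically reduced word in $\mathcal{F}$. Let $A$ be the maximal ascent of $W$, and let $M$ and $m$ be the peak and the low of $W$, respectively. If $A$ is a subword of $W$, then $W\succ 1_\mathcal{F}$ and $M=mA$. Consequently, $W$ has exactly one subword equivalent to $A$, and no subword of $W^{-1}$ is equivalent to $A$. Moreover, if $W=AD$ with $D\neq 1_\mathcal{F}$, then $D$ is a descent.
   Context: Words are over $X^*=X\cup X^{-1}$; a word $y_1\cdots y_n$ is reduced if $y_i\neq y_{i+1}^{-1}$ for all $i$, and cyclically reduced if moreover $y_1\neq y_n^{-1}$. Words are identified with the elements of $\mathcal{F}$ they represent; $1_\mathcal{F}$ is the empty word. A bi-order on $\mathcal{F}$ is a total order invariant under both left and right multiplication. A subword of $W$ is a word $V$ with $W=SVU$ and $|W|=|S|+|V|+|U|$; it is a prefix if $S$ is empty and a suffix if $U$ is empty. Two subwords (in different positions) are equivalent if they have the same spelling. If $W=UV$ with $U$ a prefix, then $VU$ is a cyclic permutation of $W$. $R_W$ denotes the set of cyclic permutations of $W$ and of $W^{-1}$. A word $U$ is an ascent if every (nonempty) prefix and every (nonempty) suffix of $U$ (including $U$ itself) is $\succ 1_\mathcal{F}$, and a descent if every such prefix and suffix is $\prec 1_\mathcal{F}$. The maximal ascent of $W$ is the greatest (with respect to $\prec$) ascent among all subwords of elements of $R_W$. The peak (resp. low) of $W$ is the largest (resp. smallest) prefix of $W$ with respect to $\prec$, where prefixes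 include the empty word and $W$ itself. *)

theory Defs
  imports Main "HOL-Library.Sublist"
begin

text \<open>Letters of X* = X \<union> X^-1: a generator together with a sign (True = x, False = x^-1).
  Words are lists of letters; elements of the free group F(X) are reduced words.\<close>

type_synonym 'a letter = "'a \<times> bool"
type_synonym 'a word = "'a letter list"

definition inv_letter :: "'a letter \<Rightarrow> 'a letter" where
  "inv_letter y = (fst y, \<not> snd y)"

definition reduced :: "'a word \<Rightarrow> bool" where
  "reduced w \<longleftrightarrow> (\<forall>i. Suc i < length w \<longrightarrow> w ! i \<noteq> inv_letter (w ! Suc i))"

definition cyclically_reduced :: "'a word \<Rightarrow> bool" where
  "cyclically_reduced w \<longleftrightarrow> reduced w \<and> (w \<noteq> [] \<longrightarrow> hd w \<noteq> inv_letter (last w))"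

fun reduce :: "'a word \<Rightarrow> 'a word" where
  "reduce [] = []"
| "reduce (x # xs) =
     (case reduce xs of
        [] \<Rightarrow> [x]
      | y # ys \<Rightarrow> (if y = inv_letter x then ys else x # y # ys))"

definition fmult :: "'a word \<Rightarrow> 'a word \<Rightarrow> 'a word" where
  "fmult u v = reduce (u @ v)"

definition finv :: "'a word \<Rightarrow> 'a word" where
  "finv w = rev (map inv_letter w)"

definition biorder :: "('a word \<Rightarrow> 'a word \<Rightarrow> bool) \<Rightarrow> bool" where
  "biorder lt \<longleftrightarrow>
     (\<forall>u. reduced u \<longrightarrow> \<not> lt u u) \<and>
     (\<forall>u v w. reduced u \<and> reduced v \<and> reduced w \<and> lt u v \<and> lt v w \<longrightarrow> lt u w) \<and>
     (\<forall>u v. reduced u \<and> reduced v \<longrightarrow> u = v \<or> lt u v \<or> lt v u) \<and>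
     (\<forall>u v w. reduced u \<and> reduced v \<and> reduced w \<and> lt u v \<longrightarrow>
        lt (fmult w u) (fmult w v) \<and> lt (fmult u w) (fmult v w))"

definition wless :: "('a word \<Rightarrow> 'a word \<Rightarrow> bool) \<Rightarrow> 'a word \<Rightarrow> 'a word \<Rightarrow> bool" where
  "wless lt u v \<longleftrightarrow> lt (reduce u) (reduce v)"

definition wle :: "('a word \<Rightarrow> 'a word \<Rightarrow> bool) \<Rightarrow> 'a word \<Rightarrow> 'a word \<Rightarrow> bool" where
  "wle lt u v \<longleftrightarrow> reduce u = reduce v \<or> lt (reduce u) (reduce v)"

definition in_RW :: "'a word \<Rightarrow> 'a word \<Rightarrow> bool" where
  "in_RW W V \<longleftrightarrow> (\<exists>k. V = rotate k W \<or> V = rotate k (finv W))"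

definition ascent :: "('a word \<Rightarrow> 'a word \<Rightarrow> bool) \<Rightarrow> 'a word \<Rightarrow> bool" where
  "ascent lt U \<longleftrightarrow> U \<noteq> [] \<and>
     (\<forall>P. prefix P U \<and> P \<noteq> [] \<longrightarrow> wless lt [] P) \<and>
     (\<forall>S. suffix S U \<and> S \<noteq> [] \<longrightarrow> wless lt [] S)"

definition descent :: "('a word \<Rightarrow> 'a word \<Rightarrow> bool) \<Rightarrow> 'a word \<Rightarrow> bool" where
  "descent lt U \<longleftrightarrow> U \<noteq> [] \<and>
     (\<forall>P. prefix P U \<and> P \<noteq> [] \<longrightarrow> wless lt P []) \<and>
     (\<forall>S. suffix S U \<and> S \<noteq> [] \<longrightarrow> wless lt S [])"

definition max_ascent :: "('a word \<Rightarrow> 'a word \<Rightarrow> bool) \<Rightarrow> 'a word \<Rightarrow> 'a word \<Rightarrow> bool" where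
  "max_ascent lt W A \<longleftrightarrow>
     ascent lt A \<and> (\<exists>R. in_RW W R \<and> sublist A R) \<and>
     (\<forall>B R. in_RW W R \<and> sublist B R \<and> ascent lt B \<longrightarrow> wle lt B A)"

definition peak :: "('a word \<Rightarrow> 'a word \<Rightarrow> bool) \<Rightarrow> 'a word \<Rightarrow> 'a word \<Rightarrow> bool" where
  "peak lt W M \<longleftrightarrow> prefix M W \<and> (\<forall>P. prefix P W \<longrightarrow> wle lt P M)"

definition low :: "('a word \<Rightarrow> 'a word \<Rightarrow> bool) \<Rightarrow> 'a word \<Rightarrow> 'a word \<Rightarrow> bool" where
  "low lt W m \<longleftrightarrow> prefix m W \<and> (\<forall>P. prefix P W \<longrightarrow> wle lt m P)"

end

theory Submission
  imports Defs
begin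


lemma inv_inv[simp]: "inv_letter (inv_letter x) = x"
  by (simp add: inv_letter_def)

lemma inv_eq_iff: "(x = inv_letter y) = (y = inv_letter x)"
  by (auto simp: inv_letter_def)

lemma reduced_Nil[simp]: "reduced []" by (simp add: reduced_def)
lemma reduced_single[simp]: "reduced [x]" by (simp add: reduced_def)

lemma reduced_Cons_Cons: "reduced (x # y # ys) = (x \<noteq> inv_letter y \<and> reduced (y # ys))"
proof
  assume r: "reduced (x # y # ys)"
  have "x \<noteq> inv_letter y" using r[unfolded reduced_def, rule_format, of 0] by simp
  moreover have "reduced (y # ys)" unfolding reduced_def
  proof (intro allI impI)
    fix i assume "Suc i < length (y # ys)"
    then show "(y # ys) ! i \<noteq> inv_letter ((y # ys) ! Suc i)"
      using r[unfolded reduced_def, rule_format, of "Suc i"] by simp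
  qed
  ultimately show "x \<noteq> inv_letter y \<and> reduced (y # ys)" by simp
next
  assume h: "x \<noteq> inv_letter y \<and> reduced (y # ys)"
  show "reduced (x # y # ys)" unfolding reduced_def
  proof (intro allI impI)
    fix i assume "Suc i < length (x # y # ys)"
    then show "(x # y # ys) ! i \<noteq> inv_letter ((x # y # ys) ! Suc i)"
      using h[THEN conjunct2, unfolded reduced_def, rule_format, of "i - 1"] h
      by (cases i) auto
  qed
qed

lemma reduced_tl: "reduced (x # xs) \<Longrightarrow> reduced xs"
  by (cases xs) (auto simp: reduced_Cons_Cons)

lemma reduced_reduce: "reduced (reduce w)"
proof (induction w)
  case Nil then show ?case by simp
next
  case (Cons x xs)
  show ?case
  proof (cases "reduce xs")
    case Nil then show ?thesis by simp
  next
    case (Cons y ys)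
    then show ?thesis using Cons.IH
      by (auto simp: reduced_Cons_Cons inv_eq_iff dest: reduced_tl)
  qed
qed

lemma reduce_reduced: "reduced w \<Longrightarrow> reduce w = w"
proof (induction w)
  case Nil then show ?case by simp
next
  case (Cons x xs)
  have "reduced xs" using Cons.prems by (rule reduced_tl)
  then have "reduce xs = xs" using Cons.IH by simp
  then show ?case using Cons.prems
    by (cases xs) (auto simp: reduced_Cons_Cons inv_eq_iff)
qed

lemma reduce_idem[simp]: "reduce (reduce w) = reduce w"
  by (rule reduce_reduced[OF reduced_reduce])

lemma reduce_cancel: "reduce (x # inv_letter x # xs) = reduce xs"
proof (cases "reduce xs")
  case Nil then show ?thesis by simp
next
  case (Cons y ys)
  have r: "reduced (y # ys)" using reduced_reduce[of xs] Cons by simp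
  show ?thesis
  proof (cases "y = x")
    case True
    then show ?thesis using Cons r
      by (cases ys) (auto simp: reduced_Cons_Cons inv_eq_iff)
  next
    case False
    then show ?thesis using Cons by (simp add: inv_letter_def)
  qed
qed

lemma reduce_Cons_cong: "reduce xs = reduce ys \<Longrightarrow> reduce (x # xs) = reduce (x # ys)"
  by simp

lemma reduce_app_cong: "reduce xs = reduce ys \<Longrightarrow> reduce (zs @ xs) = reduce (zs @ ys)"
  by (induction zs) auto

lemma reduce_app_right: "reduce (xs @ ys) = reduce (xs @ reduce ys)"
  by (rule reduce_app_cong) simp

lemma reduce_app_left: "reduce (xs @ ys) = reduce (reduce xs @ ys)"
proof (induction xs)
  case Nil then show ?case by (simp add: reduce_app_right[of "[]"])
next
  case (Cons x xs)
  have "reduce (x # xs @ ys) = reduce (x # (reduce xs @ ys))"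
    using Cons.IH by simp
  also have "\<dots> = reduce (reduce (x # xs) @ ys)"
  proof (cases "reduce xs")
    case Nil then show ?thesis
      by (simp add: reduce_app_right[of "[x]" ys, simplified])
  next
    case (Cons y zs)
    show ?thesis
    proof (cases "y = inv_letter x")
      case True then show ?thesis using Cons reduce_cancel by simp
    next
      case False
      then show ?thesis using Cons by (simp add: reduce_app_right[of "x # y # zs"])
    qed
  qed
  finally show ?case by simp
qed

lemma reduce_app_both: "reduce (xs @ ys) = reduce (reduce xs @ reduce ys)"
  by (metis reduce_app_left reduce_app_right)

lemma reduce_mid_cong: "reduce u = reduce u' \<Longrightarrow> reduce (x @ u @ y) = reduce (x @ u' @ y)"
  by (metis reduce_app_cong reduce_app_left)

lemma finv_append[simp]: "finv (u @ v) = finv v @ finv u"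
  by (simp add: finv_def)
lemma finv_finv[simp]: "finv (finv u) = u"
  by (simp add: finv_def rev_map comp_def)
lemma finv_Nil[simp]: "finv [] = []" by (simp add: finv_def)
lemma length_finv[simp]: "length (finv u) = length u" by (simp add: finv_def)

lemma reduce_finv_left: "reduce (finv w @ w @ u) = reduce u"
proof (induction w arbitrary: u)
  case Nil then show ?case by simp
next
  case (Cons x w)
  have "finv (x # w) @ (x # w) @ u = finv w @ (inv_letter x # inv_letter (inv_letter x) # w @ u)"
    by (simp add: finv_def)
  then have "reduce (finv (x # w) @ (x # w) @ u) = reduce (finv w @ (w @ u))"
    using reduce_app_cong[OF reduce_cancel[of "inv_letter x" "w @ u"], of "finv w"] by simp
  then show ?case using Cons.IH by simp
qed

lemma reduce_finv_right: "reduce (w @ finv w @ u) = reduce u"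
  using reduce_finv_left[of "finv w" u] by simp


lemma reduce_finv_cong: "reduce x = reduce x' \<Longrightarrow> reduce (finv x) = reduce (finv x')"
proof -
  assume h: "reduce x = reduce x'"
  have "reduce (finv x) = reduce (finv x @ x' @ finv x')"
    using reduce_app_cong[OF reduce_finv_right[of x' "[]", symmetric], of "finv x"] by simp
  also have "\<dots> = reduce (finv x @ x @ finv x')"
    using reduce_mid_cong[OF h[symmetric], of "finv x" "finv x'"] by simp
  also have "\<dots> = reduce (finv x')" by (rule reduce_finv_left)
  finally show ?thesis .
qed




lemma wle_iff: "wle lt u v = (reduce u = reduce v \<or> wless lt u v)"
  by (simp add: wle_def wless_def)

context
  fixes lt :: "'a word \<Rightarrow> 'a word \<Rightarrow> bool"
  assumes bo: "biorder lt"
begin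

lemma bo_irr: "reduced u \<Longrightarrow> \<not> lt u u"
  using bo unfolding biorder_def by blast
lemma bo_trans: "reduced u \<Longrightarrow> reduced v \<Longrightarrow> reduced w \<Longrightarrow> lt u v \<Longrightarrow> lt v w \<Longrightarrow> lt u w"
  using bo unfolding biorder_def by blast
lemma bo_total: "reduced u \<Longrightarrow> reduced v \<Longrightarrow> u = v \<or> lt u v \<or> lt v u"
  using bo unfolding biorder_def by blast
lemma bo_mult: "reduced u \<Longrightarrow> reduced v \<Longrightarrow> reduced w \<Longrightarrow> lt u v \<Longrightarrow>
    lt (fmult w u) (fmult w v) \<and> lt (fmult u w) (fmult v w)"
  using bo unfolding biorder_def by blast

lemma wl_irr: "reduce u = reduce v \<Longrightarrow> \<not> wless lt u v"
  unfolding wless_def using bo_irr[OF reduced_reduce] by simp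

lemma wl_trans: "wless lt u v \<Longrightarrow> wless lt v w \<Longrightarrow> wless lt u w"
  unfolding wless_def using bo_trans[OF reduced_reduce reduced_reduce reduced_reduce] by blast

lemma wl_total: "reduce u = reduce v \<or> wless lt u v \<or> wless lt v u"
  unfolding wless_def using bo_total[OF reduced_reduce reduced_reduce] by blast

lemma wl_asym: "wless lt u v \<Longrightarrow> \<not> wless lt v u"
  using wl_trans wl_irr by blast

lemma wl_left: "wless lt u v \<Longrightarrow> wless lt (w @ u) (w @ v)"
proof -
  assume "wless lt u v"
  then have "lt (fmult (reduce w) (reduce u)) (fmult (reduce w) (reduce v))"
    unfolding wless_def using bo_mult[OF reduced_reduce reduced_reduce reduced_reduce] by blast
  then show ?thesis unfolding wless_def fmult_def by (simp only: reduce_app_both[symmetric])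
qed

lemma wl_right: "wless lt u v \<Longrightarrow> wless lt (u @ w) (v @ w)"
proof -
  assume "wless lt u v"
  then have "lt (fmult (reduce u) (reduce w)) (fmult (reduce v) (reduce w))"
    unfolding wless_def using bo_mult[OF reduced_reduce reduced_reduce reduced_reduce] by blast
  then show ?thesis unfolding wless_def fmult_def by (simp only: reduce_app_both[symmetric])
qed

lemma wl_left_iff: "wless lt (w @ u) (w @ v) = wless lt u v"
proof
  assume h: "wless lt (w @ u) (w @ v)"
  show "wless lt u v"
  proof (rule ccontr)
    assume "\<not> wless lt u v"
    then have "reduce u = reduce v \<or> wless lt v u" using wl_total by blast
    then show False
    proof
      assume "reduce u = reduce v"
      then have "reduce (w @ u) = reduce (w @ v)" by (rule reduce_app_cong)
      then show False using h wl_irr by blast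
    next
      assume "wless lt v u"
      then show False using h wl_left wl_asym by blast
    qed
  qed
qed (rule wl_left)

lemma wl_right_iff: "wless lt (u @ w) (v @ w) = wless lt u v"
proof
  assume h: "wless lt (u @ w) (v @ w)"
  show "wless lt u v"
  proof (rule ccontr)
    assume "\<not> wless lt u v"
    then have "reduce u = reduce v \<or> wless lt v u" using wl_total by blast
    then show False
    proof
      assume "reduce u = reduce v"
      then have "reduce (u @ w) = reduce (v @ w)" by (simp only: reduce_app_left[of u] reduce_app_left[of v])
      then show False using h wl_irr by blast
    next
      assume "wless lt v u"
      then show False using h wl_right wl_asym by blast
    qed
  qed
qed (rule wl_right)

lemma wl_cong: "reduce u = reduce u' \<Longrightarrow> reduce v = reduce v' \<Longrightarrow> wless lt u v = wless lt u' v'"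
  by (simp add: wless_def)

lemma G1: "wless lt [] (finv x @ y) = wless lt x y"
proof -
  have "wless lt [] (finv x @ y) = wless lt (x @ []) (x @ finv x @ y)"
    by (rule wl_left_iff[symmetric])
  also have "\<dots> = wless lt x y"
    by (rule wl_cong) (simp_all add: reduce_finv_right[of x y, simplified])
  finally show ?thesis .
qed

lemma G2: "wless lt (finv x @ y) [] = wless lt y x"
proof -
  have "wless lt (finv x @ y) [] = wless lt (x @ finv x @ y) (x @ [])"
    by (rule wl_left_iff[symmetric])
  also have "\<dots> = wless lt y x"
    by (rule wl_cong) (simp_all add: reduce_finv_right[of x y, simplified])
  finally show ?thesis .
qed

lemma wl_finv: "wless lt x y \<Longrightarrow> wless lt (finv y) (finv x)"
proof -
  assume "wless lt x y"
  then have "wless lt (finv y @ x @ finv x) (finv y @ y @ finv x)"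
    by (simp add: wl_left_iff wl_right_iff)
  moreover have "reduce (finv y @ x @ finv x) = reduce (finv y)"
    using reduce_app_cong[OF reduce_finv_right[of x "[]"], of "finv y"] by simp
  moreover have "reduce (finv y @ y @ finv x) = reduce (finv x)"
    using reduce_finv_left[of y "finv x"] by simp
  ultimately show ?thesis by (simp add: wless_def)
qed

lemma wle_wl_trans: "wle lt a b \<Longrightarrow> wless lt b c \<Longrightarrow> wless lt a c"
  unfolding wle_iff wless_def using bo_trans[OF reduced_reduce reduced_reduce reduced_reduce] by auto

lemma wl_wle_trans: "wless lt a b \<Longrightarrow> wle lt b c \<Longrightarrow> wless lt a c"
  unfolding wle_iff wless_def using bo_trans[OF reduced_reduce reduced_reduce reduced_reduce] by auto

lemma G3:
  assumes "wle lt x x'" and "wle lt y' y" and "wless lt x x' \<or> wless lt y' y"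
  shows "wless lt (finv x' @ y') (finv x @ y)"
proof -
  have a: "wle lt (finv x' @ y') (finv x @ y')"
  proof (cases "reduce x = reduce x'")
    case True
    then have "reduce (finv x') = reduce (finv x)" using reduce_finv_cong by metis
    then have "reduce (finv x' @ y') = reduce (finv x @ y')"
      by (simp only: reduce_app_left[of "finv x'"] reduce_app_left[of "finv x"])
    then show ?thesis unfolding wle_iff by blast
  next
    case False
    then have "wless lt x x'" using assms(1) unfolding wle_iff by blast
    then show ?thesis unfolding wle_iff using wl_finv wl_right by blast
  qed
  have b: "wle lt (finv x @ y') (finv x @ y)"
  proof (cases "reduce y' = reduce y")
    case True
    then show ?thesis unfolding wle_iff using reduce_app_cong by blast
  next
    case False
    then have "wless lt y' y" using assms(2) unfolding wle_iff by blast
    then show ?thesis unfolding wle_iff using wl_left by blast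
  qed
  have "wless lt (finv x' @ y') (finv x @ y') \<or> wless lt (finv x @ y') (finv x @ y)"
    using assms(3) wl_finv wl_right wl_left by blast
  then show ?thesis using a b wle_wl_trans wl_wle_trans by blast
qed

end



lemma reduced_take: "reduced w \<Longrightarrow> reduced (take k w)"
  unfolding reduced_def by auto

lemma reduced_drop: "reduced w \<Longrightarrow> reduced (drop k w)"
  unfolding reduced_def
proof (intro allI impI)
  fix i assume r: "\<forall>i. Suc i < length w \<longrightarrow> w ! i \<noteq> inv_letter (w ! Suc i)"
    and h: "Suc i < length (drop k w)"
  then have "Suc (k + i) < length w" by simp
  then have "w ! (k + i) \<noteq> inv_letter (w ! Suc (k + i))" using r by blast
  then show "drop k w ! i \<noteq> inv_letter (drop k w ! Suc i)" using h by simp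
qed

lemma prefix_distinct:
  assumes "reduced W" "k \<le> length W" "l \<le> length W" "k \<noteq> l"
  shows "reduce (take k W) \<noteq> reduce (take l W)"
proof
  assume "reduce (take k W) = reduce (take l W)"
  then have "take k W = take l W" using assms(1) by (simp add: reduce_reduced reduced_take)
  then have "length (take k W) = length (take l W)" by simp
  then show False using assms(2-4) by simp
qed

lemma V1: "a \<le> b \<Longrightarrow> reduce (drop a (take b W)) = reduce (finv (take a W) @ take b W)"
proof -
  assume "a \<le> b"
  then have "take a (take b W) = take a W" by (simp add: min.absorb1)
  then have e: "take b W = take a W @ drop a (take b W)"
    using append_take_drop_id[of a "take b W"] by simp
  have "reduce (finv (take a W) @ take b W) = reduce (finv (take a W) @ take a W @ drop a (take b W))"
    by (subst e) simp
  also have "\<dots> = reduce (drop a (take b W))" by (rule reduce_finv_left)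
  finally show ?thesis by simp
qed

lemma V2: "reduce (drop a W @ take b W) = reduce (finv (take a W) @ W @ take b W)"
proof -
  have e: "W @ take b W = take a W @ drop a W @ take b W"
    by (simp only: append.assoc[symmetric] append_take_drop_id)
  show ?thesis unfolding e by (rule reduce_finv_left[symmetric])
qed

lemma P1:
  assumes "j \<le> length W" "prefix P (drop i (take j W))" "P \<noteq> []"
  shows "\<exists>k. i < k \<and> k \<le> j \<and> P = drop i (take k W)"
proof -
  obtain Z where Z: "drop i (take j W) = P @ Z" using assms(2) prefix_def by blast
  have "P = take (length P) (drop i (take j W))" using Z by simp
  also have "\<dots> = drop i (take (length P + i) (take j W))" by (simp add: take_drop)
  also have "\<dots> = drop i (take (min (length P + i) j) W)" by simp
  finally have e: "P = drop i (take (min (length P + i) j) W)" .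
  have "i < min (length P + i) j"
  proof (rule ccontr)
    assume "\<not> i < min (length P + i) j"
    then have "min (length P + i) j \<le> i" by (simp only: not_less)
    then have "length (take (min (length P + i) j) W) \<le> i"
      by (metis length_take min.cobounded2 order_trans)
    then have "drop i (take (min (length P + i) j) W) = []" by (rule drop_all)
    then show False using e assms(3) by simp
  qed
  then show ?thesis using e by (intro exI[of _ "min (length P + i) j"]) auto
qed

lemma S1:
  assumes "j \<le> length W" "suffix S (drop i (take j W))" "S \<noteq> []"
  shows "\<exists>k. i \<le> k \<and> k < j \<and> S = drop k (take j W)"
proof -
  obtain Z where Z: "drop i (take j W) = Z @ S" using assms(2) suffix_def by blast
  have "S = drop (length Z) (drop i (take j W))" using Z by simp
  also have "\<dots> = drop (length Z + i) (take j W)" by (simp add: add.commute)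
  finally have e: "S = drop (length Z + i) (take j W)" .
  have "length Z + i < j"
  proof (rule ccontr)
    assume "\<not> length Z + i < j"
    then have "length (take j W) \<le> length Z + i" by simp
    then have "drop (length Z + i) (take j W) = []" by (rule drop_all)
    then show False using e assms(3) by simp
  qed
  then show ?thesis using e by (intro exI[of _ "length Z + i"]) auto
qed

lemma P2:
  assumes "i \<le> length W" "j \<le> length W" "prefix P (drop i W @ take j W)" "P \<noteq> []"
  shows "(\<exists>k. i < k \<and> k \<le> length W \<and> P = drop i (take k W)) \<or>
         (\<exists>k. k \<le> j \<and> P = drop i W @ take k W)"
proof -
  obtain Z where Z: "drop i W @ take j W = P @ Z" using assms(3) prefix_def by blast
  have P: "P = take (length P) (drop i W @ take j W)" using Z by simp
  show ?thesis
  proof (cases "length P \<le> length (drop i W)")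
    case True
    then have "P = take (length P) (drop i W)" using P by simp
    then have "prefix P (drop i (take (length W) W))" by (metis take_all order_refl take_is_prefix)
    then show ?thesis using P1[of "length W" W P i] assms(4) by auto
  next
    case False
    then have "P = drop i W @ take (length P - length (drop i W)) (take j W)" using P by simp
    also have "\<dots> = drop i W @ take (min (length P - length (drop i W)) j) W"
      by (simp add: min.commute)
    finally show ?thesis by (intro disjI2 exI[of _ "min (length P - length (drop i W)) j"]) simp
  qed
qed

lemma S2:
  assumes "i \<le> length W" "j \<le> length W" "suffix S (drop i W @ take j W)" "S \<noteq> []"
  shows "(\<exists>k. i \<le> k \<and> k < length W \<and> S = drop k W @ take j W) \<or>
         (\<exists>k. k < j \<and> S = drop k (take j W))"
proof -
  obtain Z where Z: "drop i W @ take j W = Z @ S" using assms(3) suffix_def by blast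
  have S: "S = drop (length Z) (drop i W @ take j W)" using Z by simp
  have len: "length Z + length S = (length W - i) + j" using Z assms(2)
    by (metis length_append length_drop length_take min.absorb2)
  show ?thesis
  proof (cases "length (drop i W) \<le> length Z")
    case True
    then have "S = drop (length Z - length (drop i W)) (take j W)" using S by simp
    moreover have "length S > 0" using assms(4) by simp
    then have "length Z - length (drop i W) < j" using len True by (simp only: length_drop)
    ultimately show ?thesis by blast
  next
    case False
    then have "S = drop (length Z) (drop i W) @ take j W" using S by simp
    also have "\<dots> = drop (i + length Z) W @ take j W" by (simp add: add.commute)
    finally show ?thesis using False by (intro disjI1 exI[of _ "i + length Z"]) auto
  qed
qed




lemma rot_in:
  assumes "k \<le> length W" shows "in_RW W (drop k W @ take k W)"
proof (cases "k = length W")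
  case True
  then have "drop k W @ take k W = rotate 0 W" by simp
  then show ?thesis unfolding in_RW_def by blast
next
  case False
  then have "k mod length W = k" using assms by simp
  then have "rotate k W = drop k W @ take k W" by (simp add: rotate_drop_take)
  then show ?thesis unfolding in_RW_def by metis
qed

lemma rot_inv_in:
  assumes "k \<le> length W" shows "in_RW W (finv (drop k W @ take k W))"
proof -
  have "finv W = finv (drop k W) @ finv (take k W)"
    using finv_append[of "take k W" "drop k W"] by simp
  then have "rotate (length (finv (drop k W))) (finv W) = finv (take k W) @ finv (drop k W)"
    by (simp only: rotate_append)
  then show ?thesis unfolding in_RW_def by (metis finv_append)
qed

lemma in_RW_self: "in_RW W W"
  unfolding in_RW_def by (metis rotate0 id_apply)

lemma in_RW_finv: "in_RW W (finv W)"
  unfolding in_RW_def by (metis rotate0 id_apply)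

lemma sublist_finv: "sublist X Y \<Longrightarrow> sublist (finv X) (finv Y)"
  unfolding sublist_def by (metis finv_append append.assoc)

lemma win_sub1: "i \<le> j \<Longrightarrow> sublist (drop i (take j W)) W"
proof -
  assume "i \<le> j"
  have "W = take j W @ drop j W" by simp
  also have "take j W = take i (take j W) @ drop i (take j W)" by (rule append_take_drop_id[symmetric])
  finally have "W = take i (take j W) @ drop i (take j W) @ drop j W" by simp
  then show ?thesis unfolding sublist_def by blast
qed

lemma win_sub2: "j \<le> k \<Longrightarrow> sublist (drop k W @ take j W) (drop k W @ take k W)"
proof -
  assume "j \<le> k"
  then have "take j (take k W) = take j W" by (simp add: min.absorb1)
  then have "take k W = take j W @ drop j (take k W)"
    using append_take_drop_id[of j "take k W"] by simp
  then have "drop k W @ take k W = [] @ (drop k W @ take j W) @ drop j (take k W)" by simp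
  then show ?thesis unfolding sublist_def by blast
qed

lemma prefix_finv: "prefix P (finv X) \<Longrightarrow> suffix (finv P) X"
  unfolding prefix_def suffix_def by (metis finv_append finv_finv)

lemma suffix_finv: "suffix S (finv X) \<Longrightarrow> prefix (finv S) X"
  unfolding prefix_def suffix_def by (metis finv_append finv_finv)

lemma finv_Nil_iff[simp]: "(finv X = []) = (X = [])"
  by (simp add: finv_def)

lemma occ1: "sublist A W \<Longrightarrow> \<exists>s. s + length A \<le> length W \<and> A = drop s (take (s + length A) W)"
proof -
  assume "sublist A W"
  then obtain ps ss where e: "W = ps @ A @ ss" unfolding sublist_def by blast
  then have "A = drop (length ps) (take (length ps + length A) W)" by simp
  moreover have "length ps + length A \<le> length W" using e by simp
  ultimately show ?thesis by blast
qed

lemma occ2: "take (length A) (drop i W) = A \<Longrightarrow> A = drop i (take (i + length A) W)"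
  by (metis take_drop add.commute)

context
  fixes lt :: "'a word \<Rightarrow> 'a word \<Rightarrow> bool"
  assumes bo: "biorder lt"
begin

lemma ascent_finv: "descent lt X \<Longrightarrow> ascent lt (finv X)"
  unfolding ascent_def descent_def
proof (intro conjI allI impI)
  assume d: "X \<noteq> [] \<and> (\<forall>P. prefix P X \<and> P \<noteq> [] \<longrightarrow> wless lt P []) \<and>
    (\<forall>S. suffix S X \<and> S \<noteq> [] \<longrightarrow> wless lt S [])"
  then show "finv X \<noteq> []" by simp
  fix P assume h: "prefix P (finv X) \<and> P \<noteq> []"
  then have "wless lt (finv P) []" using d prefix_finv by fastforce
  then show "wless lt [] P" using G1[OF bo, of "finv P" "[]"] by simp
next
  assume d: "X \<noteq> [] \<and> (\<forall>P. prefix P X \<and> P \<noteq> [] \<longrightarrow> wless lt P []) \<and>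
    (\<forall>S. suffix S X \<and> S \<noteq> [] \<longrightarrow> wless lt S [])"
  fix S assume h: "suffix S (finv X) \<and> S \<noteq> []"
  then have "wless lt (finv S) []" using d suffix_finv by fastforce
  then show "wless lt [] S" using G1[OF bo, of "finv S" "[]"] by simp
qed

lemma descent_finv: "ascent lt X \<Longrightarrow> descent lt (finv X)"
  unfolding ascent_def descent_def
proof (intro conjI allI impI)
  assume d: "X \<noteq> [] \<and> (\<forall>P. prefix P X \<and> P \<noteq> [] \<longrightarrow> wless lt [] P) \<and>
    (\<forall>S. suffix S X \<and> S \<noteq> [] \<longrightarrow> wless lt [] S)"
  then show "finv X \<noteq> []" by simp
  fix P assume h: "prefix P (finv X) \<and> P \<noteq> []"
  then have "wless lt [] (finv P)" using d prefix_finv by fastforce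
  then show "wless lt P []" using G2[OF bo, of "finv P" "[]"] by simp
next
  assume d: "X \<noteq> [] \<and> (\<forall>P. prefix P X \<and> P \<noteq> [] \<longrightarrow> wless lt [] P) \<and>
    (\<forall>S. suffix S X \<and> S \<noteq> [] \<longrightarrow> wless lt [] S)"
  fix S assume h: "suffix S (finv X) \<and> S \<noteq> []"
  then have "wless lt [] (finv S)" using d suffix_finv by fastforce
  then show "wless lt S []" using G2[OF bo, of "finv S" "[]"] by simp
qed

lemma pos_val: "reduce P = reduce (finv x @ y) \<Longrightarrow> wless lt x y \<Longrightarrow> wless lt [] P"
  using G1[OF bo, of x y] wl_cong[OF bo, of "[]" "[]" P "finv x @ y"] by simp

lemma neg_val: "reduce P = reduce (finv x @ y) \<Longrightarrow> wless lt y x \<Longrightarrow> wless lt P []"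
  using G2[OF bo, of x y] wl_cong[OF bo, of P "finv x @ y" "[]" "[]"] by simp

end



context
  fixes lt :: "'a word \<Rightarrow> 'a word \<Rightarrow> bool"
  assumes bo: "biorder lt"
begin

lemma asc_win1:
  assumes "i < j" "j \<le> length W"
    and "\<And>k. i < k \<Longrightarrow> k \<le> j \<Longrightarrow> wless lt (take i W) (take k W)"
    and "\<And>k. i \<le> k \<Longrightarrow> k < j \<Longrightarrow> wless lt (take k W) (take j W)"
  shows "ascent lt (drop i (take j W))"
  unfolding ascent_def
proof (intro conjI allI impI)
  show "drop i (take j W) \<noteq> []" using assms(1,2) by simp
next
  fix P assume h: "prefix P (drop i (take j W)) \<and> P \<noteq> []"
  then obtain k where k: "i < k" "k \<le> j" "P = drop i (take k W)" using P1[OF assms(2)] by blast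
  then show "wless lt [] P" using pos_val[OF bo V1 assms(3)] by simp
next
  fix S assume h: "suffix S (drop i (take j W)) \<and> S \<noteq> []"
  then obtain k where k: "i \<le> k" "k < j" "S = drop k (take j W)" using S1[OF assms(2)] by blast
  then show "wless lt [] S" using pos_val[OF bo V1 assms(4)] by simp
qed

lemma desc_win1:
  assumes "i < j" "j \<le> length W"
    and "\<And>k. i < k \<Longrightarrow> k \<le> j \<Longrightarrow> wless lt (take k W) (take i W)"
    and "\<And>k. i \<le> k \<Longrightarrow> k < j \<Longrightarrow> wless lt (take j W) (take k W)"
  shows "descent lt (drop i (take j W))"
  unfolding descent_def
proof (intro conjI allI impI)
  show "drop i (take j W) \<noteq> []" using assms(1,2) by simp
next
  fix P assume h: "prefix P (drop i (take j W)) \<and> P \<noteq> []"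
  then obtain k where k: "i < k" "k \<le> j" "P = drop i (take k W)" using P1[OF assms(2)] by blast
  then show "wless lt P []" using neg_val[OF bo V1 assms(3)] by simp
next
  fix S assume h: "suffix S (drop i (take j W)) \<and> S \<noteq> []"
  then obtain k where k: "i \<le> k" "k < j" "S = drop k (take j W)" using S1[OF assms(2)] by blast
  then show "wless lt S []" using neg_val[OF bo V1 assms(4)] by simp
qed

lemma asc_win2:
  assumes "i \<le> length W" "j \<le> length W" "drop i W @ take j W \<noteq> []"
    and "\<And>k. i < k \<Longrightarrow> k \<le> length W \<Longrightarrow> wless lt (take i W) (take k W)"
    and "\<And>k. k \<le> j \<Longrightarrow> wless lt (take i W) (W @ take k W)"
    and "\<And>k. i \<le> k \<Longrightarrow> k < length W \<Longrightarrow> wless lt (take k W) (W @ take j W)"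
    and "\<And>k. k < j \<Longrightarrow> wless lt (take k W) (take j W)"
  shows "ascent lt (drop i W @ take j W)"
  unfolding ascent_def
proof (intro conjI allI impI)
  show "drop i W @ take j W \<noteq> []" by (rule assms(3))
next
  fix P assume h: "prefix P (drop i W @ take j W) \<and> P \<noteq> []"
  then have "(\<exists>k. i < k \<and> k \<le> length W \<and> P = drop i (take k W)) \<or>
         (\<exists>k. k \<le> j \<and> P = drop i W @ take k W)" using P2[OF assms(1,2)] by blast
  then show "wless lt [] P"
  proof
    assume "\<exists>k. i < k \<and> k \<le> length W \<and> P = drop i (take k W)"
    then obtain k where k: "i < k" "k \<le> length W" "P = drop i (take k W)" by blast
    then show ?thesis using pos_val[OF bo V1 assms(4)] by simp
  next
    assume "\<exists>k. k \<le> j \<and> P = drop i W @ take k W"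
    then obtain k where k: "k \<le> j" "P = drop i W @ take k W" by blast
    then show ?thesis using pos_val[OF bo _ assms(5)[OF k(1)], of P] V2[of i W k] by simp
  qed
next
  fix S assume h: "suffix S (drop i W @ take j W) \<and> S \<noteq> []"
  then have "(\<exists>k. i \<le> k \<and> k < length W \<and> S = drop k W @ take j W) \<or>
         (\<exists>k. k < j \<and> S = drop k (take j W))" using S2[OF assms(1,2)] by blast
  then show "wless lt [] S"
  proof
    assume "\<exists>k. i \<le> k \<and> k < length W \<and> S = drop k W @ take j W"
    then obtain k where k: "i \<le> k" "k < length W" "S = drop k W @ take j W" by blast
    then show ?thesis using pos_val[OF bo _ assms(6)[OF k(1,2)], of S] V2[of k W j] by simp
  next
    assume "\<exists>k. k < j \<and> S = drop k (take j W)"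
    then obtain k where k: "k < j" "S = drop k (take j W)" by blast
    then show ?thesis using pos_val[OF bo V1 assms(7)] by simp
  qed
qed

lemma desc_win2:
  assumes "i \<le> length W" "j \<le> length W" "drop i W @ take j W \<noteq> []"
    and "\<And>k. i < k \<Longrightarrow> k \<le> length W \<Longrightarrow> wless lt (take k W) (take i W)"
    and "\<And>k. k \<le> j \<Longrightarrow> wless lt (W @ take k W) (take i W)"
    and "\<And>k. i \<le> k \<Longrightarrow> k < length W \<Longrightarrow> wless lt (W @ take j W) (take k W)"
    and "\<And>k. k < j \<Longrightarrow> wless lt (take j W) (take k W)"
  shows "descent lt (drop i W @ take j W)"
  unfolding descent_def
proof (intro conjI allI impI)
  show "drop i W @ take j W \<noteq> []" by (rule assms(3))
next
  fix P assume h: "prefix P (drop i W @ take j W) \<and> P \<noteq> []"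
  then have "(\<exists>k. i < k \<and> k \<le> length W \<and> P = drop i (take k W)) \<or>
         (\<exists>k. k \<le> j \<and> P = drop i W @ take k W)" using P2[OF assms(1,2)] by blast
  then show "wless lt P []"
  proof
    assume "\<exists>k. i < k \<and> k \<le> length W \<and> P = drop i (take k W)"
    then obtain k where k: "i < k" "k \<le> length W" "P = drop i (take k W)" by blast
    then show ?thesis using neg_val[OF bo V1 assms(4)] by simp
  next
    assume "\<exists>k. k \<le> j \<and> P = drop i W @ take k W"
    then obtain k where k: "k \<le> j" "P = drop i W @ take k W" by blast
    then show ?thesis using neg_val[OF bo _ assms(5)[OF k(1)], of P] V2[of i W k] by simp
  qed
next
  fix S assume h: "suffix S (drop i W @ take j W) \<and> S \<noteq> []"
  then have "(\<exists>k. i \<le> k \<and> k < length W \<and> S = drop k W @ take j W) \<or>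
         (\<exists>k. k < j \<and> S = drop k (take j W))" using S2[OF assms(1,2)] by blast
  then show "wless lt S []"
  proof
    assume "\<exists>k. i \<le> k \<and> k < length W \<and> S = drop k W @ take j W"
    then obtain k where k: "i \<le> k" "k < length W" "S = drop k W @ take j W" by blast
    then show ?thesis using neg_val[OF bo _ assms(6)[OF k(1,2)], of S] V2[of k W j] by simp
  next
    assume "\<exists>k. k < j \<and> S = drop k (take j W)"
    then obtain k where k: "k < j" "S = drop k (take j W)" by blast
    then show ?thesis using neg_val[OF bo V1 assms(7)] by simp
  qed
qed

end



theorem lemma2p3:
  fixes lt :: "'a word \<Rightarrow> 'a word \<Rightarrow> bool" and W A M m :: "'a word"
  assumes "biorder lt"
    and "cyclically_reduced W"
    and "max_ascent lt W A"
    and "peak lt W M"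
    and "low lt W m"
    and "sublist A W"
  shows "wless lt [] W \<and> M = fmult m A
    \<and> (\<exists>!i. i + length A \<le> length W \<and> take (length A) (drop i W) = A)
    \<and> \<not> sublist A (finv W)
    \<and> (\<forall>D. W = A @ D \<and> D \<noteq> [] \<longrightarrow> descent lt D)"
proof -
  note bo = assms(1)
  define n where "n = length W"
  have R: "reduced W" using assms(2) unfolding cyclically_reduced_def by blast
  have ascA: "ascent lt A" using assms(3) unfolding max_ascent_def by blast
  have maxA: "\<And>B R. in_RW W R \<Longrightarrow> sublist B R \<Longrightarrow> ascent lt B \<Longrightarrow> wle lt B A"
    using assms(3) unfolding max_ascent_def by blast
  have Ane: "A \<noteq> []" using ascA unfolding ascent_def by blast
  have contra: "\<And>B R. in_RW W R \<Longrightarrow> sublist B R \<Longrightarrow> ascent lt B \<Longrightarrow> wless lt A B \<Longrightarrow> False"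
  proof -
    fix B R assume "in_RW W R" "sublist B R" "ascent lt B" "wless lt A B"
    then have "wle lt B A" "wless lt A B" using maxA by blast+
    then show False unfolding wle_iff
      using wl_asym[OF bo] wl_irr[OF bo] by (metis wl_cong[OF bo])
  qed
  define i where "i = length m"
  have m_eq: "m = take i W" using assms(5) unfolding low_def prefix_def i_def by auto
  have i_le: "i \<le> n" using assms(5) unfolding low_def n_def i_def by (simp add: prefix_length_le)
  define j where "j = length M"
  have M_eq: "M = take j W" using assms(4) unfolding peak_def prefix_def j_def by auto
  have j_le: "j \<le> n" using assms(4) unfolding peak_def n_def j_def by (simp add: prefix_length_le)
  have lowle: "\<And>k. wle lt (take i W) (take k W)"
    using assms(5) m_eq unfolding low_def by (simp add: take_is_prefix)
  have peakle: "\<And>k. wle lt (take k W) (take j W)"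
    using assms(4) M_eq unfolding peak_def by (simp add: take_is_prefix)
  have lowlt: "\<And>k. k \<le> n \<Longrightarrow> k \<noteq> i \<Longrightarrow> wless lt (take i W) (take k W)"
    using lowle prefix_distinct[OF R] i_le unfolding wle_iff n_def by metis
  have peaklt: "\<And>k. k \<le> n \<Longrightarrow> k \<noteq> j \<Longrightarrow> wless lt (take k W) (take j W)"
    using peakle prefix_distinct[OF R] j_le unfolding wle_iff n_def by metis
  have key: "\<And>a b. a \<le> n \<Longrightarrow> b \<le> n \<Longrightarrow> a \<noteq> i \<or> b \<noteq> j \<Longrightarrow>
      wless lt (finv (take a W) @ take b W) (finv (take i W) @ take j W)"
    using G3[OF bo lowle peakle] lowlt peaklt by blast
  have valA: "\<And>s. A = drop s (take (s + length A) W) \<Longrightarrow>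
      reduce A = reduce (finv (take s W) @ take (s + length A) W)"
    using V1 by (metis le_add1)
  obtain s0 where s0: "s0 + length A \<le> n" "A = drop s0 (take (s0 + length A) W)"
    using occ1[OF assms(6)] n_def by blast
  have lAp: "0 < length A" using Ane by simp
  then have npos: "0 < n" using s0(1) by linarith
  have ij: "i < j"
  proof -
    have "\<not> j < i"
    proof
      assume ji: "j < i"
      have d: "descent lt (drop j (take i W))"
        apply (rule desc_win1[OF bo ji i_le[unfolded n_def]])
        using i_le ji by (auto intro!: peaklt lowlt)
      have asc: "ascent lt (finv (drop j (take i W)))" by (rule ascent_finv[OF bo d])
      have sub: "sublist (finv (drop j (take i W))) (finv W)"
        by (rule sublist_finv[OF win_sub1]) (use ji in simp)
      have "reduce (drop j (take i W)) = reduce (finv (take j W) @ take i W)"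
        by (rule V1) (use ji in simp)
      then have vB: "reduce (finv (drop j (take i W))) = reduce (finv (take i W) @ take j W)"
        using reduce_finv_cong by fastforce
      have "wless lt (finv (take s0 W) @ take (s0 + length A) W) (finv (take i W) @ take j W)"
        using key[of s0 "s0 + length A"] s0(1) ji lAp by simp
      then have "wless lt A (finv (drop j (take i W)))"
        using valA[OF s0(2)] vB wl_cong[OF bo] by blast
      then show False using contra[OF in_RW_finv sub asc] by blast
    qed
    moreover have "i \<noteq> j"
    proof
      assume "i = j"
      define k :: nat where "k = (if i = 0 then 1 else 0)"
      have "k \<le> n" "k \<noteq> i" using npos by (auto simp: k_def)
      then show False using lowlt peaklt \<open>i = j\<close> wl_asym[OF bo] by blast
    qed
    ultimately show ?thesis by simp
  qed
  have B0asc: "ascent lt (drop i (take j W))"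
    apply (rule asc_win1[OF bo ij j_le[unfolded n_def]])
    using j_le ij by (auto intro!: peaklt lowlt)
  have B0sub: "sublist (drop i (take j W)) W" by (rule win_sub1) (use ij in simp)
  have vB0: "reduce (drop i (take j W)) = reduce (finv (take i W) @ take j W)"
    by (rule V1) (use ij in simp)
  have occ: "\<And>s. s + length A \<le> n \<Longrightarrow> A = drop s (take (s + length A) W) \<Longrightarrow>
      s = i \<and> s + length A = j"
  proof (rule ccontr)
    fix s assume h: "s + length A \<le> n" "A = drop s (take (s + length A) W)"
      "\<not> (s = i \<and> s + length A = j)"
    then have "wless lt (finv (take s W) @ take (s + length A) W) (finv (take i W) @ take j W)"
      using key[of s "s + length A"] by simp
    then have "wless lt A (drop i (take j W))"
      using valA[OF h(2)] vB0 wl_cong[OF bo] by blast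
    then show False using contra[OF in_RW_self B0sub B0asc] by blast
  qed
  have s0i: "s0 = i" and jA: "j = i + length A" using occ[OF s0] by auto
  have A_eq: "A = drop i (take j W)" using s0 s0i jA by simp
  have MmA: "M = fmult m A"
  proof -
    have "take i (take j W) = take i W" using ij by (simp add: min.absorb1)
    then have "take i W @ drop i (take j W) = take j W"
      using append_take_drop_id[of i "take j W"] by simp
    then have "fmult m A = reduce (take j W)" unfolding fmult_def m_eq A_eq by simp
    then show ?thesis using M_eq reduce_reduced[OF reduced_take[OF R]] by simp
  qed
  have uniq: "\<exists>!i'. i' + length A \<le> length W \<and> take (length A) (drop i' W) = A"
  proof
    show "i + length A \<le> length W \<and> take (length A) (drop i W) = A"
      using s0 s0i n_def by (simp add: take_drop add.commute)
  next
    fix i' assume "i' + length A \<le> length W \<and> take (length A) (drop i' W) = A"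
    then show "i' = i" using occ occ2 n_def by blast
  qed
  have Wpos: "wless lt [] W"
  proof -
    have "reduce [] \<noteq> reduce W" using reduce_reduced[OF R] npos n_def by auto
    moreover have "\<not> wless lt W []"
    proof
      assume Wneg: "wless lt W []"
      have "drop j W @ take i W \<noteq> []"
      proof
        assume "drop j W @ take i W = []"
        then have "j = n" "i = 0" using j_le npos n_def by auto
        then have "wless lt [] W" using lowlt[of j] ij n_def by simp
        then show False using Wneg wl_asym[OF bo] by blast
      qed
      have WL: "\<And>k. wless lt (W @ take k W) (take k W)"
        using wl_right[OF bo Wneg] by simp
      have d: "descent lt (drop j W @ take i W)"
      proof (rule desc_win2[OF bo j_le[unfolded n_def] i_le[unfolded n_def] \<open>drop j W @ take i W \<noteq> []\<close>])
        fix k assume "j < k" "k \<le> length W"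
        then show "wless lt (take k W) (take j W)" using peaklt n_def by simp
      next
        fix k assume "k \<le> i"
        show "wless lt (W @ take k W) (take j W)" using wl_wle_trans[OF bo WL peakle] .
      next
        fix k assume "j \<le> k" "k < length W"
        show "wless lt (W @ take i W) (take k W)" using wl_wle_trans[OF bo WL lowle] .
      next
        fix k assume "k < i"
        then show "wless lt (take i W) (take k W)" using lowlt i_le by simp
      qed
      have asc: "ascent lt (finv (drop j W @ take i W))" by (rule ascent_finv[OF bo d])
      have sub: "sublist (finv (drop j W @ take i W)) (finv (drop j W @ take j W))"
        by (rule sublist_finv[OF win_sub2]) (use ij in simp)
      have inR: "in_RW W (finv (drop j W @ take j W))" using rot_inv_in j_le n_def by simp
      have "reduce (finv (drop j W @ take i W)) = reduce (finv (finv (take j W) @ W @ take i W))"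
        using reduce_finv_cong V2 by blast
      then have vB: "reduce (finv (drop j W @ take i W)) = reduce (finv (take i W) @ finv W @ take j W)"
        by simp
      have "wless lt (finv []) (finv W)" by (rule wl_finv[OF bo Wneg])
      then have "wless lt ([] @ take j W) (finv W @ take j W)" using wl_right[OF bo, of "[]" "finv W" "take j W"] by simp
      then have "wless lt (finv (take i W) @ take j W) (finv (take i W) @ finv W @ take j W)"
        using wl_left[OF bo] by simp
      then have "wless lt A (finv (drop j W @ take i W))"
        using vB0 vB A_eq wl_cong[OF bo] by metis
      then show False using contra[OF inR sub asc] by blast
    qed
    ultimately show ?thesis using wl_total[OF bo] by blast
  qed
  have notinv: "\<not> sublist A (finv W)"
  proof
    assume "sublist A (finv W)"
    then have "sublist (finv A) W" using sublist_finv by fastforce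
    then obtain s where s: "s + length A \<le> n" "finv A = drop s (take (s + length A) W)"
      using occ1 n_def by fastforce
    have "reduce (finv A) = reduce (finv (take s W) @ take (s + length A) W)"
      using s(2) V1 by (metis le_add1)
    then have vA: "reduce A = reduce (finv (take (s + length A) W) @ take s W)"
      using reduce_finv_cong by fastforce
    have "s + length A \<noteq> i \<or> s \<noteq> j" using ij lAp by auto
    then have "wless lt (finv (take (s + length A) W) @ take s W) (finv (take i W) @ take j W)"
      using key s(1) by simp
    then have "wless lt A A" using vA valA[OF s0(2)] s0i jA wl_cong[OF bo]
      by (metis vB0 A_eq)
    then show False using wl_irr[OF bo] by blast
  qed
  have descD: "\<And>D. W = A @ D \<Longrightarrow> D \<noteq> [] \<Longrightarrow> descent lt D"
  proof -
    fix D assume WD: "W = A @ D" and Dne: "D \<noteq> []"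
    have "0 + length A \<le> n" "A = drop 0 (take (0 + length A) W)" using WD n_def by simp_all
    then have i0: "i = 0" and jA': "j = length A" using occ by force+
    have jn: "j < n" using WD Dne jA' n_def by simp
    have D_eq: "D = drop j (take (length W) W)" using WD jA' by simp
    have A_tj: "A = take j W" using A_eq i0 by simp
    have bigger: "\<And>k. j \<le> k \<Longrightarrow> k < length W \<Longrightarrow> wless lt (take (length W) W) (take k W)"
    proof (rule ccontr)
      fix k0 assume k0: "j \<le> k0" "k0 < length W" "\<not> wless lt (take (length W) W) (take k0 W)"
      have "reduce (take k0 W) \<noteq> reduce (take (length W) W)"
        using prefix_distinct[OF R, of k0 "length W"] k0 by simp
      then have "wless lt (take k0 W) W" using k0(3) wl_total[OF bo] by force
      define K where "K = {k. j \<le> k \<and> k < n \<and> wless lt (take k W) W}"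
      have finK: "finite K" unfolding K_def by (rule finite_subset[of _ "{..<n}"]) auto
      have "k0 \<in> K" unfolding K_def using k0 \<open>wless lt (take k0 W) W\<close> n_def by simp
      define k where "k = Max K"
      have kK: "k \<in> K" unfolding k_def using finK \<open>k0 \<in> K\<close> Max_in by blast
      have kmax: "\<And>l. l \<in> K \<Longrightarrow> l \<le> k" unfolding k_def using finK by simp
      have jk: "j \<le> k" and kn: "k < n" and kW: "wless lt (take k W) W" using kK K_def by auto
      have above: "\<And>l. k < l \<Longrightarrow> l < n \<Longrightarrow> wless lt W (take l W)"
      proof -
        fix l assume "k < l" "l < n"
        then have "l \<notin> K" using kmax by force
        then have "\<not> wless lt (take l W) W" using \<open>k < l\<close> \<open>l < n\<close> jk K_def by simp
        moreover have "reduce (take l W) \<noteq> reduce (take (length W) W)"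
          using prefix_distinct[OF R, of l "length W"] \<open>l < n\<close> n_def by simp
        ultimately show "wless lt W (take l W)" using wl_total[OF bo] by force
      qed
      have Xne: "drop k W @ take j W \<noteq> []" using kn n_def by simp
      have Wp: "\<And>l. wless lt (take l W) (W @ take l W)"
        using wl_right[OF bo Wpos] by simp
      have asc: "ascent lt (drop k W @ take j W)"
      proof (rule asc_win2[OF bo _ _ Xne])
        show "k \<le> length W" "j \<le> length W" using kn j_le n_def by simp_all
      next
        fix l assume "k < l" "l \<le> length W"
        then show "wless lt (take k W) (take l W)"
          using kW above wl_trans[OF bo] n_def by (cases "l = n") auto
      next
        fix l assume "l \<le> j"
        have "wle lt [] (take l W)" using lowle[of l] i0 by simp
        then have "wle lt (W @ []) (W @ take l W)"
          unfolding wle_iff using reduce_app_cong wl_left[OF bo] by blast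
        then show "wless lt (take k W) (W @ take l W)" using wl_wle_trans[OF bo kW] by simp
      next
        fix l assume "k \<le> l" "l < length W"
        show "wless lt (take l W) (W @ take j W)" using wle_wl_trans[OF bo peakle Wp] .
      next
        fix l assume "l < j"
        then show "wless lt (take l W) (take j W)" using peaklt j_le by simp
      qed
      have inR: "in_RW W (drop k W @ take k W)" using rot_in[of k W] kn n_def by simp
      have sub: "sublist (drop k W @ take j W) (drop k W @ take k W)" using win_sub2 jk by blast
      have "wless lt [] (finv (take k W) @ W)" using G1[OF bo] kW by blast
      then have "wless lt ([] @ take j W) ((finv (take k W) @ W) @ take j W)"
        by (rule wl_right[OF bo])
      then have "wless lt A (finv (take k W) @ W @ take j W)" using A_tj by simp
      then have "wless lt A (drop k W @ take j W)" using V2 wl_cong[OF bo] by metis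
      then show False using contra[OF inR sub asc] by blast
    qed
    show "descent lt D" unfolding D_eq
      apply (rule desc_win1[OF bo _ order_refl])
      using jn n_def apply simp
      using peaklt n_def apply simp
      using bigger by simp
  qed
  show ?thesis using Wpos MmA uniq notinv descD by blast
qed

end
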